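(* Let $K=\mathbb{F}_2(t)$, so that the completion at the infinite place is $K_{t^{-1}}=\mathbb{F}_2((t^{-1}))$. Write $y\in K_{t^{-1}}$ as $y=\sum_{i\le N}a_it^i$ with $N\in\mathbb{Z}$ and $a_i\in\mathbb{F}_2$, setting $a_i=0$ for $i>N$. Then the conic $C_y: x_0^2+x_0x_1+yx_1^2=tx_2^2$ has a $K_{t^{-1}}$-point if and only if $a_0=0$. *)

theory Defs
  imports "HOL-Library.Z2" "HOL-Computational_Algebra.Formal_Laurent_Series"
begin

end

theory Submission
  imports Defs
begin
unbundle fps_syntax
declare add_bit_eq_xor[simp del] mult_bit_eq_and[simp del]

lemma bit_add_self [simp]: "(x::bit) + x = 0"
  by (cases x) simp_all
lemma bit_mult_self [simp]: "(x::bit) * x = x"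
  by (cases x) simp_all

lemma sum_invol_bit:
  fixes g :: "'b \<Rightarrow> bit"
  assumes "finite S" "\<forall>i\<in>S. \<sigma> i \<in> S \<and> \<sigma> (\<sigma> i) = i \<and> g (\<sigma> i) = g i"
  shows "sum g S = sum g {i\<in>S. \<sigma> i = i}"
  using assms
proof (induction "card S" arbitrary: S rule: less_induct)
  case less
  show ?case
  proof (cases "\<forall>i\<in>S. \<sigma> i = i")
    case True
    then have "{i\<in>S. \<sigma> i = i} = S" by auto
    then show ?thesis by simp
  next
    case False
    then obtain a where a: "a \<in> S" "\<sigma> a \<noteq> a" by auto
    define S' where "S' = S - {a, \<sigma> a}"
    have sa: "\<sigma> a \<in> S" "g (\<sigma> a) = g a" using less.prems a by auto
    have fin: "finite S'" using less.prems S'_def by auto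
    have "S' \<subset> S" unfolding S'_def using a by auto
    then have c: "card S' < card S" using less.prems(1) by (simp add: psubset_card_mono)
    have h: "\<forall>i\<in>S'. \<sigma> i \<in> S' \<and> \<sigma> (\<sigma> i) = i \<and> g (\<sigma> i) = g i"
    proof
      fix i assume i: "i \<in> S'"
      then have iS: "i \<in> S" "i \<noteq> a" "i \<noteq> \<sigma> a" unfolding S'_def by auto
      have p: "\<sigma> i \<in> S" "\<sigma> (\<sigma> i) = i" "g (\<sigma> i) = g i" using less.prems(2) iS(1) by auto
      have "\<sigma> i \<noteq> a" using p(2) iS(3) by auto
      moreover have "\<sigma> i \<noteq> \<sigma> a" using p(2) iS(2) less.prems(2) a(1) by metis
      ultimately show "\<sigma> i \<in> S' \<and> \<sigma> (\<sigma> i) = i \<and> g (\<sigma> i) = g i"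
        using p unfolding S'_def by auto
    qed
    have IH: "sum g S' = sum g {i\<in>S'. \<sigma> i = i}"
      using less.hyps[OF c fin h] .
    have Sdec: "S = insert a (insert (\<sigma> a) S')" using a sa S'_def by auto
    have n1: "a \<notin> insert (\<sigma> a) S'" using a S'_def by auto
    have n2: "\<sigma> a \<notin> S'" using S'_def by auto
    have "sum g S = g a + sum g (insert (\<sigma> a) S')"
      by (subst Sdec, rule sum.insert) (use fin n1 in auto)
    also have "sum g (insert (\<sigma> a) S') = g (\<sigma> a) + sum g S'"
      by (rule sum.insert[OF fin n2])
    finally have "sum g S = g a + g (\<sigma> a) + sum g S'" by (simp only: add.assoc)
    also have "\<dots> = sum g S'" using sa by simp
    finally have s1: "sum g S = sum g S'" .
    have "{i\<in>S'. \<sigma> i = i} = {i\<in>S. \<sigma> i = i}"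
      using a less.prems unfolding S'_def by auto
    then show ?thesis using IH s1 by simp
  qed
qed

lemma sq_nth:
  fixes A :: "bit fls"
  shows "(A^2) $$ n = (if even n then A $$ (n div 2) else 0)"
proof -
  define d where "d = fls_subdegree A"
  have "(A^2) $$ n = (\<Sum>i=d..n - d. A $$ i * A $$ (n - i))"
    unfolding power2_eq_square d_def by (rule fls_times_nth(2))
  also have "\<dots> = (\<Sum>i\<in>{i\<in>{d..n-d}. n - i = i}. A $$ i * A $$ (n - i))"
    by (rule sum_invol_bit) (auto simp: mult.commute)
  also have "\<dots> = (if even n then A $$ (n div 2) else 0)"
  proof (cases "even n")
    case True
    then obtain m where m: "n = 2*m" by auto
    show ?thesis
    proof (cases "d \<le> m")
      case True
      then have "{i\<in>{d..n-d}. n - i = i} = {m}" using m by auto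
      then show ?thesis using m by simp
    next
      case False
      then have "{i\<in>{d..n-d}. n - i = i} = {}" using m by auto
      then show ?thesis using m False d_def by simp
    qed
  next
    case False
    have "n - i \<noteq> i" for i using False by (metis dvd_triv_left eq_diff_eq mult_2)
    then have E: "{i\<in>{d..n-d}. n - i = i} = {}" by auto
    show ?thesis by (subst E) (simp add: False)
  qed
  finally show ?thesis .
qed

definition mkfls :: "int \<Rightarrow> (int \<Rightarrow> 'a::zero) \<Rightarrow> 'a fls" where
  "mkfls L g = fls_shift (-L) (fps_to_fls (Abs_fps (\<lambda>n. g (int n + L))))"

lemma mkfls_nth: "(\<forall>j<L. g j = 0) \<Longrightarrow> mkfls L g $$ j = g j"
  by (auto simp: mkfls_def)

fun posX :: "bit fls \<Rightarrow> nat \<Rightarrow> bit" where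
  "posX y n = (if n = 0 \<or> odd n then 0 else y $$ int n + posX y (n div 2))"
declare posX.simps[simp del]

fun negX :: "bit fls \<Rightarrow> nat \<Rightarrow> int \<Rightarrow> bit" where
  "negX y 0 j = 0"
| "negX y (Suc k) j = y $$ (2*j) + negX y k (2*j)"

lemma negX_Suc': "negX y (Suc k) j = negX y k j + y $$ (2^(Suc k) * j)"
proof (induction k arbitrary: j)
  case 0
  then show ?case by simp
next
  case (Suc k)
  have "negX y (Suc (Suc k)) j = y $$ (2*j) + negX y (Suc k) (2*j)" by simp
  also have "\<dots> = y $$ (2*j) + negX y k (2*j) + y $$ (2^(Suc k) * (2*j))"
    by (simp only: Suc.IH add.assoc)
  also have "(2::int)^(Suc k) * (2*j) = 2^(Suc (Suc k)) * j" by simp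
  finally show ?case by simp
qed

lemma negX_vanish: "2*j < fls_subdegree y \<Longrightarrow> j < 0 \<Longrightarrow> negX y k j = 0"
proof (induction k arbitrary: j)
  case 0
  then show ?case by simp
next
  case (Suc k)
  have "y $$ (2*j) = 0" using Suc.prems by simp
  moreover have "negX y k (2*j) = 0" using Suc by simp
  ultimately show ?case by simp
qed

lemma key_exists:
  fixes y :: "bit fls"
  assumes y0: "y $$ 0 = 0"
  shows "\<exists>X Z. X^2 + X + y = fls_X_inv * Z^2"
proof -
  define d where "d = fls_subdegree y"
  define B0 where "B0 = nat (-d)"
  define g where "g = (\<lambda>j. if j < 0 then negX y (Suc B0) j else if j = 0 then 0 else posX y (nat j))"
  define X where "X = mkfls (min 0 d) g"
  have gz: "\<forall>j<min 0 d. g j = 0" unfolding g_def d_def by (auto intro!: negX_vanish)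
  have Xn: "X $$ j = g j" for j unfolding X_def using gz by (rule mkfls_nth)
  have keyX: "X $$ m + X $$ (2*m) + y $$ (2*m) = 0" if "m \<noteq> 0" for m
  proof (cases "m < 0")
    case True
    have "int B0 < 2^B0" by (metis of_nat_less_iff less_exp of_nat_numeral of_nat_power)
    have "(2::int)^(Suc B0) * (2*m) \<le> (2::int)^(Suc B0) * (2*(-1))"
      using True by (intro mult_left_mono) auto
    also have "\<dots> = - (4 * 2^B0)" by simp
    also have "\<dots> < -B0" using \<open>int B0 < 2^B0\<close> by (smt (verit) zero_less_power)
    also have "-int B0 \<le> d" unfolding B0_def by simp
    finally have lt: "(2::int)^(Suc B0) * (2*m) < d" .
    have "X $$ m = y $$ (2*m) + negX y B0 (2*m)" using True by (simp add: Xn g_def)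
    moreover have "X $$ (2*m) = negX y B0 (2*m)"
      using True lt by (simp add: Xn g_def negX_Suc'[of y B0 "2*m"] d_def del: negX.simps power_Suc)
    ultimately show ?thesis by (simp add: algebra_simps)
  next
    case False
    then have mp: "m > 0" using that by simp
    have "nat (2*m) = 2 * nat m" using mp by simp
    then have "posX y (nat (2*m)) = y $$ (2*m) + posX y (nat m)"
      using mp by (simp add: posX.simps[of y "2 * nat m"])
    then show ?thesis using mp by (simp add: Xn g_def algebra_simps)
  qed
  define W where "W = X^2 + X + y"
  have Weven: "W $$ (2*m) = 0" for m
  proof (cases "m = 0")
    case True
    then show ?thesis using y0 by (simp add: W_def sq_nth Xn g_def)
  next
    case False
    then show ?thesis using keyX[OF False] by (simp add: W_def sq_nth)
  qed
  define dW where "dW = fls_subdegree W"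
  define Z where "Z = mkfls (min 0 dW) (\<lambda>j. W $$ (2*j - 1))"
  have Zn: "Z $$ j = W $$ (2*j - 1)" for j
    unfolding Z_def by (rule mkfls_nth) (auto simp: dW_def)
  have "fls_X_inv * Z^2 = W"
  proof (subst fls_eq_iff, intro allI)
    fix n
    have "(fls_X_inv * Z^2) $$ n = (Z^2) $$ (n+1)" by (simp add: fls_X_inv_times_conv_shift)
    also have "\<dots> = W $$ n"
    proof (cases "even n")
      case True
      then obtain m where "n = 2*m" by auto
      then show ?thesis using Weven by (simp add: sq_nth)
    next
      case False
      then obtain m where m: "n = 2*m + 1" by (metis oddE)
      then have "(Z^2) $$ (n+1) = Z $$ (m+1)" by (simp add: sq_nth ac_simps)
      then show ?thesis using m by (simp add: Zn algebra_simps)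
    qed
    finally show "(fls_X_inv * Z^2) $$ n = W $$ n" .
  qed
  then show ?thesis unfolding W_def by metis
qed


lemma conv_dir:
  fixes y x0 x1 x2 :: "bit fls"
  assumes nz: "(x0, x1, x2) \<noteq> (0, 0, 0)"
    and eq: "x0^2 + x0 * x1 + y * x1^2 = fls_X_inv * x2^2"
  shows "y $$ 0 = 0"
proof (cases "x1 = 0")
  case True
  then have e: "x0^2 = fls_X_inv * x2^2" using eq by (simp add: power2_eq_square)
  have "x0 $$ k = 0" for k
  proof -
    have "x0 $$ k = (x0^2) $$ (2*k)" by (simp add: sq_nth)
    also have "\<dots> = (x2^2) $$ (2*k + 1)" by (simp add: e fls_X_inv_times_conv_shift)
    also have "\<dots> = 0" by (simp add: sq_nth)
    finally show ?thesis .
  qed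
  then have x0: "x0 = 0" by (simp add: fls_eq_iff)
  have "x2 $$ k = 0" for k
  proof -
    have "x2 $$ k = (x2^2) $$ ((2*k - 1) + 1)" by (simp add: sq_nth)
    also have "\<dots> = (x0^2) $$ (2*k - 1)" by (simp only: e fls_X_inv_times_conv_shift fls_shift_nth)
    also have "\<dots> = 0" by (simp add: x0)
    finally show ?thesis .
  qed
  then have "x2 = 0" by (simp add: fls_eq_iff)
  then show ?thesis using nz x0 True by simp
next
  case False
  define X where "X = x0 / x1"
  define Z where "Z = x2 / x1"
  have x0e: "x0 = X * x1" using False by (simp add: X_def)
  have x2e: "x2 = Z * x1" using False by (simp add: Z_def)
  have "x0^2 + x0 * x1 + y * x1^2 = (X^2 + X + y) * x1^2"
    by (simp add: x0e power2_eq_square algebra_simps)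
  moreover have "fls_X_inv * x2^2 = (fls_X_inv * Z^2) * x1^2"
    by (simp add: x2e power2_eq_square algebra_simps)
  ultimately have "(X^2 + X + y) * x1^2 = (fls_X_inv * Z^2) * x1^2" using eq by metis
  moreover have nz2: "x1^2 \<noteq> 0" using False by simp
  ultimately have e: "X^2 + X + y = fls_X_inv * Z^2" using mult_right_cancel[OF nz2] by blast
  have "(X^2 + X + y) $$ 0 = X $$ 0 + X $$ 0 + y $$ 0" by (simp add: sq_nth)
  also have "\<dots> = y $$ 0" by simp
  finally have "y $$ 0 = (fls_X_inv * Z^2) $$ 0" using e by simp
  also have "\<dots> = (Z^2) $$ 1" by (simp add: fls_X_inv_times_conv_shift)
  also have "\<dots> = 0" by (simp add: sq_nth)
  finally show ?thesis .
qed

theorem lemma3p7: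
  fixes y :: "bit fls"
  shows "(\<exists>x0 x1 x2 :: bit fls. (x0, x1, x2) \<noteq> (0, 0, 0) \<and>
            x0^2 + x0 * x1 + y * x1^2 = fls_X_inv * x2^2)
         \<longleftrightarrow> fls_nth y 0 = 0"
proof
  assume "\<exists>x0 x1 x2 :: bit fls. (x0, x1, x2) \<noteq> (0, 0, 0) \<and>
            x0^2 + x0 * x1 + y * x1^2 = fls_X_inv * x2^2"
  then show "fls_nth y 0 = 0" using conv_dir by blast
next
  assume "fls_nth y 0 = 0"
  then obtain X Z where e: "X^2 + X + y = fls_X_inv * Z^2" using key_exists by blast
  have "(1::bit fls) \<noteq> 0" by (rule one_neq_zero)
  then have "(X, 1::bit fls, Z) \<noteq> (0, 0, 0)" by simp
  moreover have "X^2 + X * 1 + y * 1^2 = fls_X_inv * Z^2" using e by simp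
  ultimately show "\<exists>x0 x1 x2 :: bit fls. (x0, x1, x2) \<noteq> (0, 0, 0) \<and>
            x0^2 + x0 * x1 + y * x1^2 = fls_X_inv * x2^2" by blast
qed

end
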